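(* Let $P$ be a weakly ranked poset and $f,g\in\mathscr{I}_{1/2}(P)$. Then there exists a single $P$-kernel $\kappa$ whose right KLS-function is $f$ and whose left KLS-function is $g$ if and only if $\overline{\bar g f}=\bar g f$.
   Context: A weakly ranked poset is a locally finite poset $P$ (all intervals finite) with a weak rank function: integers $r_{xy}$ for $x\le y$ with $r_{xy}>0$ for $x<y$ and $r_{xy}+r_{yz}=r_{xz}$. $I(P)=\prod_{x\le y}\mathbb{Z}[t]$ with components $f_{xy}(t)$ is a ring under convolution $(fg)_{xz}=\sum_{x\le y\le z}f_{xy}g_{yz}$ with identity $\delta$ ($\delta_{xx}=1$, $\delta_{xy}=0$ for $x<y$). $\mathscr{I}(P)$ is the subring of $f$ with $\deg f_{xy}\le r_{xy}$; it has the involution $\bar f_{xy}(t)=t^{r_{xy}}f_{xy}(t^{-1})$. $\mathscr{I}_{1/2}(P)$ is the set of $f\in\mathscr{I}(P)$ with $f_{xx}=1$ for all $x$ and $\deg f_{xy}<r_{xy}/2$ for $x<y$. A $P$-kernel is $\kappa\in\mathscr{I}(P)$ with $\kappa_{xx}=1$ for all $x$ and $\kappa^{-1}=\bar\kappa$. For a $P$-kernel $\kappa$ there are unique $f,g\in\mathscr{I}_{1/2}(P)$ with $\bar f=\kappa f$ and $\bar g=g\kappa$; $f$ is the right and $g$ the left KLS-function of $\kappa$. *)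

theory Defs
  imports "HOL-Computational_Algebra.Polynomial"
begin

text \<open>A poset is modelled by a type of class order. Elements of the incidence
ring I(P) are functions x y -> int poly, normalised to be 0 when not x <= y.\<close>

type_synonym 'a inc = "'a \<Rightarrow> 'a \<Rightarrow> int poly"

definition weakly_ranked_poset :: "('a::order \<Rightarrow> 'a \<Rightarrow> int) \<Rightarrow> bool" where
  "weakly_ranked_poset r \<longleftrightarrow>
     (\<forall>x z::'a. finite {y. x \<le> y \<and> y \<le> z}) \<and>
     (\<forall>x y. x < y \<longrightarrow> r x y > 0) \<and>
     (\<forall>x y z. x \<le> y \<and> y \<le> z \<longrightarrow> r x y + r y z = r x z)"

definition inc_mult :: "'a::order inc \<Rightarrow> 'a inc \<Rightarrow> 'a inc" where
  "inc_mult f g = (\<lambda>x z. \<Sum>y\<in>{y. x \<le> y \<and> y \<le> z}. f x y * g y z)"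

definition inc_delta :: "'a::order inc" where
  "inc_delta = (\<lambda>x y. if x = y then 1 else 0)"

definition in_inc :: "'a::order inc \<Rightarrow> bool" where
  "in_inc f \<longleftrightarrow> (\<forall>x y. \<not> x \<le> y \<longrightarrow> f x y = 0)"

definition in_scrI :: "('a::order \<Rightarrow> 'a \<Rightarrow> int) \<Rightarrow> 'a inc \<Rightarrow> bool" where
  "in_scrI r f \<longleftrightarrow> in_inc f \<and> (\<forall>x y. x \<le> y \<longrightarrow> int (degree (f x y)) \<le> r x y)"

text \<open>Involution: bar f_xy(t) = t^(r_xy) f_xy(1/t).\<close>
definition bar_poly :: "int \<Rightarrow> int poly \<Rightarrow> int poly" where
  "bar_poly n p = (\<Sum>i\<le>nat n. monom (coeff p i) (nat n - i))"

definition inc_bar :: "('a::order \<Rightarrow> 'a \<Rightarrow> int) \<Rightarrow> 'a inc \<Rightarrow> 'a inc" where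
  "inc_bar r f = (\<lambda>x y. if x \<le> y then bar_poly (r x y) (f x y) else 0)"

definition in_scrI_half :: "('a::order \<Rightarrow> 'a \<Rightarrow> int) \<Rightarrow> 'a inc \<Rightarrow> bool" where
  "in_scrI_half r f \<longleftrightarrow> in_scrI r f \<and> (\<forall>x. f x x = 1) \<and>
     (\<forall>x y. x < y \<longrightarrow> 2 * int (degree (f x y)) < r x y)"

definition P_kernel :: "('a::order \<Rightarrow> 'a \<Rightarrow> int) \<Rightarrow> 'a inc \<Rightarrow> bool" where
  "P_kernel r \<kappa> \<longleftrightarrow> in_scrI r \<kappa> \<and> (\<forall>x. \<kappa> x x = 1) \<and>
     inc_mult \<kappa> (inc_bar r \<kappa>) = inc_delta \<and> inc_mult (inc_bar r \<kappa>) \<kappa> = inc_delta"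

end

theory Submission imports Defs begin

lemma coeff_bar_poly:
  "coeff (bar_poly n p) k = (if k \<le> nat n then coeff p (nat n - k) else 0)"
proof -
  have "coeff (bar_poly n p) k = (\<Sum>i\<le>nat n. if nat n - i = k then coeff p i else 0)"
    by (simp add: bar_poly_def coeff_sum coeff_monom)
  also have "\<dots> = (\<Sum>i\<le>nat n. if i = nat n - k \<and> k \<le> nat n then coeff p i else 0)"
    by (rule sum.cong) auto
  also have "\<dots> = (if k \<le> nat n then coeff p (nat n - k) else 0)"
    by (cases "k \<le> nat n") (simp_all add: sum.delta)
  finally show ?thesis .
qed

lemma degree_bar_poly: "degree (bar_poly n p) \<le> nat n"
  by (rule degree_le) (simp add: coeff_bar_poly)

lemma bar_poly_bar_poly:
  assumes "degree p \<le> nat n" shows "bar_poly n (bar_poly n p) = p"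
proof (rule poly_eqI)
  fix k show "coeff (bar_poly n (bar_poly n p)) k = coeff p k"
    using assms by (auto simp: coeff_bar_poly coeff_eq_0)
qed

lemma bar_poly_add: "bar_poly n (p + q) = bar_poly n p + bar_poly n q"
  by (rule poly_eqI) (simp add: coeff_bar_poly)

lemma bar_poly_sum: "bar_poly n (\<Sum>i\<in>A. p i) = (\<Sum>i\<in>A. bar_poly n (p i))"
  by (rule poly_eqI) (simp add: coeff_bar_poly coeff_sum)

lemma bar_poly_diff: "bar_poly n (p - q) = bar_poly n p - bar_poly n q"
  by (rule poly_eqI) (simp add: coeff_bar_poly)

lemma bar_poly_0: "bar_poly n 0 = 0"
  by (rule poly_eqI) (simp add: coeff_bar_poly)

lemma bar_poly_one: "bar_poly 0 1 = 1"
  by (rule poly_eqI) (simp add: coeff_bar_poly coeff_1)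

lemma bar_poly_reflect:
  assumes "degree p \<le> N" shows "bar_poly (int N) p = monom 1 (N - degree p) * reflect_poly p"
proof (rule poly_eqI)
  fix k show "coeff (bar_poly (int N) p) k = coeff (monom 1 (N - degree p) * reflect_poly p) k"
    using assms by (auto simp: coeff_bar_poly coeff_monom_mult coeff_reflect_poly coeff_eq_0)
qed

lemma bar_poly_mult:
  assumes "degree p \<le> M" "degree q \<le> N"
  shows "bar_poly (int (M + N)) (p * q) = bar_poly (int M) p * bar_poly (int N) q"
proof (cases "p = 0 \<or> q = 0")
  case True thus ?thesis by (auto simp: bar_poly_0)
next
  case False
  hence d: "degree (p * q) = degree p + degree q" by (simp add: degree_mult_eq)
  have "bar_poly (int (M + N)) (p * q) = monom 1 (M + N - degree (p*q)) * reflect_poly (p * q)"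
    using assms d by (intro bar_poly_reflect) simp
  also have "\<dots> = (monom 1 (M - degree p) * reflect_poly p) * (monom 1 (N - degree q) * reflect_poly q)"
    using assms by (simp add: d reflect_poly_mult mult_monom algebra_simps)
  also have "\<dots> = bar_poly (int M) p * bar_poly (int N) q"
    using assms by (simp add: bar_poly_reflect)
  finally show ?thesis .
qed


lemma wr_fin: "weakly_ranked_poset (r::'a::order\<Rightarrow>'a\<Rightarrow>int) \<Longrightarrow> finite {y. (x::'a) \<le> y \<and> y \<le> z}"
  by (simp add: weakly_ranked_poset_def)

lemma int_le_nat: "int d \<le> k \<Longrightarrow> d \<le> nat k"
  by (metis nat_int nat_mono)

lemma wr_add: "weakly_ranked_poset r \<Longrightarrow> x \<le> y \<Longrightarrow> y \<le> z \<Longrightarrow> r x y + r y z = r x z"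
  unfolding weakly_ranked_poset_def by blast

lemma wr_refl: "weakly_ranked_poset r \<Longrightarrow> r x x = 0"
  using wr_add[of r x x x] by simp

lemma wr_nonneg: "weakly_ranked_poset r \<Longrightarrow> x \<le> y \<Longrightarrow> r x y \<ge> 0"
  unfolding weakly_ranked_poset_def
  by (metis order.order_iff_strict less_le_not_le order_refl add_cancel_left_left linorder_not_le
      less_imp_le)

lemma inc_mult_assoc:
  fixes f g h :: "'a::order inc"
  assumes fin: "\<And>x z::'a. finite {y. x \<le> y \<and> y \<le> z}"
  shows "inc_mult (inc_mult f g) h = inc_mult f (inc_mult g h)"
proof (intro ext)
  fix x z :: 'a
  let ?I = "{y. x \<le> y \<and> y \<le> z}"
  have "inc_mult (inc_mult f g) h x z = (\<Sum>w\<in>?I. \<Sum>y\<in>{y. x \<le> y \<and> y \<le> w}. f x y * g y w * h w z)"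
    by (simp add: inc_mult_def sum_distrib_right)
  also have "\<dots> = (\<Sum>w\<in>?I. \<Sum>y\<in>{y. y \<in> ?I \<and> y \<le> w}. f x y * g y w * h w z)"
    by (rule sum.cong[OF refl], rule sum.cong) (auto intro: order_trans)
  also have "\<dots> = (\<Sum>y\<in>?I. \<Sum>w\<in>{w. w \<in> ?I \<and> y \<le> w}. f x y * g y w * h w z)"
    by (rule sum.swap_restrict[OF fin fin])
  also have "\<dots> = (\<Sum>y\<in>?I. \<Sum>w\<in>{w. y \<le> w \<and> w \<le> z}. f x y * (g y w * h w z))"
    by (rule sum.cong[OF refl], rule sum.cong) (auto intro: order_trans simp: mult.assoc)
  also have "\<dots> = inc_mult f (inc_mult g h) x z"
    by (simp add: inc_mult_def sum_distrib_left)
  finally show "inc_mult (inc_mult f g) h x z = inc_mult f (inc_mult g h) x z" .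
qed

lemma inc_mult_in_inc: "in_inc (inc_mult f g)"
  unfolding in_inc_def inc_mult_def
  by (auto intro!: sum.neutral dest: order_trans)

lemma delta_left:
  fixes f :: "'a::order inc"
  assumes fin: "\<And>x z::'a. finite {y. x \<le> y \<and> y \<le> z}" and "in_inc f"
  shows "inc_mult inc_delta f = f"
proof (intro ext)
  fix x z
  have "inc_mult inc_delta f x z = (\<Sum>y\<in>{y. x \<le> y \<and> y \<le> z}. if y = x then f y z else 0)"
    unfolding inc_mult_def inc_delta_def by (rule sum.cong) auto
  also have "\<dots> = f x z" using fin[of x z] assms(2) by (subst sum.delta) (auto simp: in_inc_def)
  finally show "inc_mult inc_delta f x z = f x z" .
qed

lemma delta_right:
  fixes f :: "'a::order inc"
  assumes fin: "\<And>x z::'a. finite {y. x \<le> y \<and> y \<le> z}" and "in_inc f"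
  shows "inc_mult f inc_delta = f"
proof (intro ext)
  fix x z
  have "inc_mult f inc_delta x z = (\<Sum>y\<in>{y. x \<le> y \<and> y \<le> z}. if y = z then f x y else 0)"
    unfolding inc_mult_def inc_delta_def by (rule sum.cong) auto
  also have "\<dots> = f x z" using fin[of x z] assms(2) by (subst sum.delta) (auto simp: in_inc_def)
  finally show "inc_mult f inc_delta x z = f x z" .
qed

lemma delta_scrI: "weakly_ranked_poset r \<Longrightarrow> in_scrI r inc_delta"
  unfolding in_scrI_def in_inc_def inc_delta_def by (auto simp: wr_nonneg)

lemma scrI_mult:
  assumes W: "weakly_ranked_poset r" and f: "in_scrI r f" and g: "in_scrI r g"
  shows "in_scrI r (inc_mult f g)"
  unfolding in_scrI_def
proof (intro conjI allI impI)
  show "in_inc (inc_mult f g)" by (rule inc_mult_in_inc)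
  fix x z :: 'a assume xz: "x \<le> z"
  have "degree (inc_mult f g x z) \<le> nat (r x z)"
    unfolding inc_mult_def
  proof (rule degree_sum_le[OF wr_fin[OF W]])
    fix y assume "y \<in> {y. x \<le> y \<and> y \<le> z}"
    hence y: "x \<le> y" "y \<le> z" by auto
    have "degree (f x y * g y z) \<le> degree (f x y) + degree (g y z)" by (rule degree_mult_le)
    also have "\<dots> \<le> nat (r x z)"
      using f g y wr_add[OF W y] unfolding in_scrI_def by fastforce
    finally show "degree (f x y * g y z) \<le> nat (r x z)" .
  qed
  thus "int (degree (inc_mult f g x z)) \<le> r x z" using wr_nonneg[OF W xz] by linarith
qed

lemma bar_scrI: "weakly_ranked_poset r \<Longrightarrow> in_scrI r (inc_bar r f)"
  unfolding in_scrI_def in_inc_def inc_bar_def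
proof (intro conjI allI impI)
  fix x y :: 'a assume W: "weakly_ranked_poset r" and "x \<le> y"
  hence "r x y \<ge> 0" by (rule wr_nonneg)
  thus "int (degree (if x \<le> y then bar_poly (r x y) (f x y) else 0)) \<le> r x y"
    using degree_bar_poly[of "r x y" "f x y"] by auto
qed auto

lemma bar_bar:
  assumes W: "weakly_ranked_poset r" and f: "in_scrI r f"
  shows "inc_bar r (inc_bar r f) = f"
proof (intro ext)
  fix x y
  show "inc_bar r (inc_bar r f) x y = f x y"
  proof (cases "x \<le> y")
    case True
    have "degree (f x y) \<le> nat (r x y)" using f True unfolding in_scrI_def by (auto intro: int_le_nat)
    thus ?thesis using True by (simp add: inc_bar_def bar_poly_bar_poly)
  next
    case False thus ?thesis using f by (simp add: inc_bar_def in_scrI_def in_inc_def)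
  qed
qed

lemma bar_mult:
  assumes W: "weakly_ranked_poset r" and f: "in_scrI r f" and g: "in_scrI r g"
  shows "inc_bar r (inc_mult f g) = inc_mult (inc_bar r f) (inc_bar r g)"
proof (intro ext)
  fix x z
  show "inc_bar r (inc_mult f g) x z = inc_mult (inc_bar r f) (inc_bar r g) x z"
  proof (cases "x \<le> z")
    case False thus ?thesis
      by (simp add: inc_bar_def inc_mult_def) (auto intro!: sum.neutral dest: order_trans)
  next
    case True
    have "inc_bar r (inc_mult f g) x z = (\<Sum>y\<in>{y. x \<le> y \<and> y \<le> z}. bar_poly (r x z) (f x y * g y z))"
      using True by (simp add: inc_bar_def inc_mult_def bar_poly_sum)
    also have "\<dots> = inc_mult (inc_bar r f) (inc_bar r g) x z"
      unfolding inc_mult_def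
    proof (rule sum.cong[OF refl])
      fix y assume "y \<in> {y. x \<le> y \<and> y \<le> z}"
      hence y: "x \<le> y" "y \<le> z" by auto
      have d1: "degree (f x y) \<le> nat (r x y)" and d2: "degree (g y z) \<le> nat (r y z)"
        using f g y unfolding in_scrI_def by (auto intro: int_le_nat)
      have n1: "r x y \<ge> 0" "r y z \<ge> 0" using wr_nonneg[OF W] y by auto
      have e: "r x z = int (nat (r x y) + nat (r y z))" using wr_add[OF W y] n1 by simp
      show "bar_poly (r x z) (f x y * g y z) = inc_bar r f x y * inc_bar r g y z"
        using bar_poly_mult[OF d1 d2] n1 y unfolding e by (simp add: inc_bar_def)
    qed
    finally show ?thesis .
  qed
qed

lemma bar_delta: "weakly_ranked_poset r \<Longrightarrow> inc_bar r inc_delta = inc_delta"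
  by (auto simp: inc_bar_def inc_delta_def wr_refl bar_poly_one bar_poly_0 intro!: ext)


fun ipow :: "'a::order inc \<Rightarrow> nat \<Rightarrow> 'a inc" where
  "ipow m 0 = inc_delta"
| "ipow m (Suc k) = inc_mult m (ipow m k)"

lemma ipow_scrI:
  assumes W: "weakly_ranked_poset r" and m: "in_scrI r m"
  shows "in_scrI r (ipow m k)"
  by (induction k) (simp_all add: delta_scrI[OF W] scrI_mult[OF W m])

lemma ipow_nil:
  fixes m :: "'a::order inc"
  assumes fin: "\<And>x z::'a. finite {y. x \<le> y \<and> y \<le> z}" and m0: "\<And>x. m x x = 0"
  shows "card {y. x \<le> y \<and> y \<le> z} \<le> k \<Longrightarrow> ipow m k x z = 0"
proof (induction k arbitrary: x z)
  case 0
  hence "{y. x \<le> y \<and> y \<le> z} = {}" using fin[of x z] by simp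
  hence "\<not> x \<le> z" by auto
  thus ?case by (auto simp: inc_delta_def)
next
  case (Suc k)
  have "ipow m (Suc k) x z = (\<Sum>y\<in>{y. x \<le> y \<and> y \<le> z}. m x y * ipow m k y z)"
    by (simp add: inc_mult_def)
  also have "\<dots> = 0"
  proof (rule sum.neutral, intro ballI)
    fix y assume y: "y \<in> {y. x \<le> y \<and> y \<le> z}"
    show "m x y * ipow m k y z = 0"
    proof (cases "y = x")
      case True thus ?thesis using m0 by simp
    next
      case False
      have "x \<notin> {w. y \<le> w \<and> w \<le> z}" using y False by auto
      moreover have "{w. y \<le> w \<and> w \<le> z} \<subseteq> {w. x \<le> w \<and> w \<le> z}"
        using y by (auto intro: order_trans)
      moreover have "x \<in> {w. x \<le> w \<and> w \<le> z}" using y by (auto intro: order_trans)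
      ultimately have "{w. y \<le> w \<and> w \<le> z} \<subset> {w. x \<le> w \<and> w \<le> z}"
        by blast
      hence "card {w. y \<le> w \<and> w \<le> z} < card {w. x \<le> w \<and> w \<le> z}"
        using fin by (rule psubset_card_mono[rotated])
      hence "card {w. y \<le> w \<and> w \<le> z} \<le> k" using Suc.prems by simp
      thus ?thesis using Suc.IH by simp
    qed
  qed
  finally show ?case .
qed

lemma right_inverse_exists:
  assumes W: "weakly_ranked_poset r" and f: "in_scrI r f" and f1: "\<And>x. f x x = 1"
  shows "\<exists>h. in_scrI r h \<and> (\<forall>x. h x x = 1) \<and> inc_mult f h = inc_delta"
proof -
  note fin = wr_fin[OF W]
  define m where "m = (\<lambda>x y. inc_delta x y - f x y)"
  have m0: "\<And>x. m x x = 0" by (simp add: m_def inc_delta_def f1)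
  have nil: "\<And>x z k. card {y. x \<le> y \<and> y \<le> z} \<le> k \<Longrightarrow> ipow m k x z = 0"
    by (rule ipow_nil[where m=m, OF fin m0])
  have mS: "in_scrI r m"
    unfolding in_scrI_def
  proof (intro conjI allI impI)
    show "in_inc m" using f by (auto simp: m_def in_inc_def in_scrI_def inc_delta_def)
    fix x y :: 'a assume xy: "x \<le> y"
    show "int (degree (m x y)) \<le> r x y"
    proof (cases "x = y")
      case True thus ?thesis using m0 wr_refl[OF W] by simp
    next
      case False thus ?thesis using f xy by (simp add: m_def inc_delta_def in_scrI_def)
    qed
  qed
  have fm: "\<And>x y. f x y = inc_delta x y - m x y" by (simp add: m_def)
  have key: "inc_mult f p = (\<lambda>x z. p x z - inc_mult m p x z)" if p: "in_inc p" for p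
  proof (intro ext)
    fix x z
    have "inc_mult f p x z = inc_mult inc_delta p x z - inc_mult m p x z"
      unfolding inc_mult_def fm by (simp add: algebra_simps sum_subtractf)
    thus "inc_mult f p x z = p x z - inc_mult m p x z"
      using delta_left[OF fin p] by simp
  qed
  define h where "h = (\<lambda>x z. \<Sum>k\<le>card {y. x \<le> y \<and> y \<le> z}. ipow m k x z)"
  have hN: "h x z = (\<Sum>k\<le>N. ipow m k x z)" if N: "card {y. x \<le> y \<and> y \<le> z} \<le> N" for x z N
    unfolding h_def
    by (rule sum.mono_neutral_left) (use N nil in auto)
  have ipS: "\<And>k. in_scrI r (ipow m k)" by (rule ipow_scrI[OF W mS])
  have hS: "in_scrI r h"
    unfolding in_scrI_def
  proof (intro conjI allI impI)
    show "in_inc h" unfolding in_inc_def h_def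
      using ipS by (auto simp: in_scrI_def in_inc_def)
    fix x z :: 'a assume xz: "x \<le> z"
    have "degree (h x z) \<le> nat (r x z)" unfolding h_def
      by (rule degree_sum_le) (use ipS xz in \<open>auto simp: in_scrI_def intro: int_le_nat\<close>)
    thus "int (degree (h x z)) \<le> r x z" using wr_nonneg[OF W xz] by linarith
  qed
  have h1: "h x x = 1" for x
  proof -
    have c: "card {y. x \<le> y \<and> y \<le> x} = 1"
      by (subgoal_tac "{y. x \<le> y \<and> y \<le> x} = {x}") auto
    have "h x x = ipow m 0 x x + ipow m 1 x x" unfolding h_def c by simp
    moreover have "ipow m 1 x x = 0" by (rule nil) (simp add: c)
    ultimately show ?thesis by (simp add: inc_delta_def)
  qed
  have fh: "inc_mult f h = inc_delta"
  proof (intro ext)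
    fix x z :: 'a
    show "inc_mult f h x z = inc_delta x z"
    proof (cases "x \<le> z")
      case False
      thus ?thesis using inc_mult_in_inc[of f h] by (auto simp: in_inc_def inc_delta_def)
    next
      case True
      define N where "N = card {y. x \<le> y \<and> y \<le> z}"
      have "inc_mult f h x z = (\<Sum>y\<in>{y. x \<le> y \<and> y \<le> z}. f x y * (\<Sum>k\<le>N. ipow m k y z))"
        unfolding inc_mult_def
      proof (rule sum.cong[OF refl])
        fix y assume y: "y \<in> {y. x \<le> y \<and> y \<le> z}"
        have "card {w. y \<le> w \<and> w \<le> z} \<le> N" unfolding N_def
          by (rule card_mono[OF fin]) (use y in \<open>auto intro: order_trans\<close>)
        thus "f x y * h y z = f x y * (\<Sum>k\<le>N. ipow m k y z)" using hN by simp
      qed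
      also have "\<dots> = (\<Sum>k\<le>N. inc_mult f (ipow m k) x z)"
        unfolding inc_mult_def by (simp add: sum_distrib_left sum.swap[of _ "{..N}"])
      also have "\<dots> = (\<Sum>k\<le>N. ipow m k x z - ipow m (Suc k) x z)"
        using key ipS by (simp add: in_scrI_def)
      also have "\<dots> = ipow m 0 x z - ipow m (Suc N) x z" by (rule sum_telescope)
      also have "ipow m (Suc N) x z = 0" by (rule nil) (simp add: N_def)
      finally show ?thesis by simp
    qed
  qed
  show ?thesis using hS h1 fh by blast
qed

lemma inverse_exists:
  assumes W: "weakly_ranked_poset r" and f: "in_scrI r f" and f1: "\<And>x. f x x = 1"
  shows "\<exists>h. in_scrI r h \<and> (\<forall>x. h x x = 1) \<and> inc_mult f h = inc_delta \<and> inc_mult h f = inc_delta"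
proof -
  obtain h where h: "in_scrI r h" "\<And>x. h x x = 1" "inc_mult f h = inc_delta"
    using right_inverse_exists[OF W f f1] by blast
  obtain h2 where h2: "in_scrI r h2" "inc_mult h h2 = inc_delta"
    using right_inverse_exists[OF W h(1) h(2)] by blast
  have "f = inc_mult f (inc_mult h h2)" using h2 delta_right[OF wr_fin[OF W]] f
    by (simp add: in_scrI_def)
  also have "\<dots> = inc_mult (inc_mult f h) h2" by (rule inc_mult_assoc[OF wr_fin[OF W], symmetric])
  also have "\<dots> = h2" using h(3) delta_left[OF wr_fin[OF W]] h2(1)
    by (simp add: in_scrI_def)
  finally have "inc_mult h f = inc_delta" using h2 by simp
  thus ?thesis using h by blast
qed


lemma inc_mult_diag: "inc_mult p q x x = p x x * q (x::'a::order) x"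
proof -
  have "{y. x \<le> y \<and> y \<le> x} = {x}" by auto
  thus ?thesis by (simp add: inc_mult_def)
qed

theorem proposition2p7:
  fixes r :: "'a::order \<Rightarrow> 'a \<Rightarrow> int" and f g :: "'a inc"
  assumes "weakly_ranked_poset r" and "in_scrI_half r f" and "in_scrI_half r g"
  shows "(\<exists>\<kappa>. P_kernel r \<kappa> \<and> inc_bar r f = inc_mult \<kappa> f \<and> inc_bar r g = inc_mult g \<kappa>)
         \<longleftrightarrow> inc_bar r (inc_mult (inc_bar r g) f) = inc_mult (inc_bar r g) f"
proof -
  note W = assms(1)
  note fin = wr_fin[OF W]
  note A = inc_mult_assoc[OF fin]
  have fS: "in_scrI r f" and f1: "\<And>x. f x x = 1" using assms(2) by (auto simp: in_scrI_half_def)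
  have gS: "in_scrI r g" using assms(3) by (auto simp: in_scrI_half_def)
  have bfS: "in_scrI r (inc_bar r f)" and bgS: "in_scrI r (inc_bar r g)" by (rule bar_scrI[OF W])+
  have inI: "\<And>p. in_scrI r p \<Longrightarrow> in_inc p" by (simp add: in_scrI_def)
  have DL: "\<And>p. in_scrI r p \<Longrightarrow> inc_mult inc_delta p = p" using delta_left[OF fin] inI by blast
  have DR: "\<And>p. in_scrI r p \<Longrightarrow> inc_mult p inc_delta = p" using delta_right[OF fin] inI by blast
  have key: "inc_bar r (inc_mult (inc_bar r g) f) = inc_mult g (inc_bar r f)"
    using bar_mult[OF W bgS fS] bar_bar[OF W gS] by simp
  show ?thesis
  proof
    assume "\<exists>\<kappa>. P_kernel r \<kappa> \<and> inc_bar r f = inc_mult \<kappa> f \<and> inc_bar r g = inc_mult g \<kappa>"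
    then obtain k where k: "inc_bar r f = inc_mult k f" "inc_bar r g = inc_mult g k" by blast
    have "inc_bar r (inc_mult (inc_bar r g) f) = inc_mult g (inc_mult k f)" using key k by simp
    also have "\<dots> = inc_mult (inc_bar r g) f" using k A by simp
    finally show "inc_bar r (inc_mult (inc_bar r g) f) = inc_mult (inc_bar r g) f" .
  next
    assume hyp: "inc_bar r (inc_mult (inc_bar r g) f) = inc_mult (inc_bar r g) f"
    obtain h where h: "in_scrI r h" "\<And>x. h x x = 1" "inc_mult f h = inc_delta" "inc_mult h f = inc_delta"
      using inverse_exists[OF W fS f1] by blast
    define k where "k = inc_mult (inc_bar r f) h"
    have kS: "in_scrI r k" unfolding k_def by (rule scrI_mult[OF W bfS h(1)])
    have bf1: "inc_bar r f x x = 1" for x by (simp add: inc_bar_def f1 wr_refl[OF W] bar_poly_one)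
    have k1: "k x x = 1" for x by (simp add: k_def inc_mult_diag bf1 h(2))
    have kb: "inc_bar r k = inc_mult f (inc_bar r h)"
      unfolding k_def using bar_mult[OF W bfS h(1)] bar_bar[OF W fS] by simp
    have bhS: "in_scrI r (inc_bar r h)" by (rule bar_scrI[OF W])
    have kf: "inc_mult k f = inc_bar r f"
      unfolding k_def A h(4) using DR[OF bfS] .
    have "inc_mult k (inc_bar r k) = inc_mult (inc_bar r f) (inc_mult (inc_mult h f) (inc_bar r h))"
      unfolding kb unfolding k_def A ..
    also have "\<dots> = inc_bar r (inc_mult f h)"
      unfolding h(4) DL[OF bhS] using bar_mult[OF W fS h(1)] by simp
    also have "\<dots> = inc_delta" unfolding h(3) by (rule bar_delta[OF W])
    finally have kk1: "inc_mult k (inc_bar r k) = inc_delta" .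
    have "inc_mult (inc_bar r k) k = inc_mult f (inc_mult (inc_mult (inc_bar r h) (inc_bar r f)) h)"
      unfolding kb unfolding k_def A ..
    also have "\<dots> = inc_mult f (inc_mult (inc_bar r (inc_mult h f)) h)"
      using bar_mult[OF W h(1) fS] by simp
    also have "\<dots> = inc_delta" unfolding h(4) bar_delta[OF W] DL[OF h(1)] h(3) ..
    finally have kk2: "inc_mult (inc_bar r k) k = inc_delta" .
    have gf: "inc_mult g (inc_bar r f) = inc_mult (inc_bar r g) f" using hyp key by simp
    have "inc_mult g k = inc_mult (inc_mult g (inc_bar r f)) h" unfolding k_def A ..
    also have "\<dots> = inc_bar r g" unfolding gf A h(3) using DR[OF bgS] .
    finally have gk: "inc_bar r g = inc_mult g k" by simp
    have "P_kernel r k" unfolding P_kernel_def using kS k1 kk1 kk2 by blast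
    thus "\<exists>\<kappa>. P_kernel r \<kappa> \<and> inc_bar r f = inc_mult \<kappa> f \<and> inc_bar r g = inc_mult g \<kappa>"
      using kf gk by auto
  qed
qed

end
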